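(* Let $\mathcal{G}=(\mathcal{N}_0,\mathcal{E})$ be a tree (radial distribution network) with node set $\mathcal{N}_0=\{0,1,\dots,n\}$, where node $0$ is the substation, and let $\mathcal{N}=\mathcal{N}_0\setminus\{0\}$. Each line $(h,k)\in\mathcal{E}$ has reactance $x_{hk}>0$. Define the $n\times n$ matrix $X$ by $X_{ij}=2\sum_{(h,k)\in P_i\cap P_j} x_{hk}$ for $i,j\in\mathcal{N}$, where $P_i$ is the set of lines on the unique path from node $0$ to node $i$. For each $i\in\mathcal{N}$ let $\underline{v}_i\le \bar{v}_i$ be given bounds, and let $g_i:\mathbb{R}\to\mathbb{R}$ be a decentralized control policy. Consider the closed-loop voltage dynamics $$\mathbf{v}(t)=X\mathbf{q}(t)+\mathbf{v}^{env},\qquad \dot{q}_i(t)=u_i(t)=g_i(v_i(t)),\quad i\in\mathcal{N},$$ where $\mathbf{v}^{env}\in\mathbb{R}^n$ is a constant vector, $\mathbf{q}(t)\in\mathbb{R}^n$ is the reactive power injection and $\mathbf{v}(t)\in\mathbb{R}^n$ the voltage magnitude vector. Suppose that for every $i\in\mathcal{N}$, $g_i$ is continuously differentiable, satisfies $g_i(v_i)=0$ for $v_i\in[\underline{v}_i,\bar{v}_i]$, is strictly monotonically decreasing on $(-\infty,\underline{v}_i]$ and on $[\bar{v}_i,\infty)$, and satisfies $\lim_{v_i\to\infty}|g_i(v_i)|=\infty$. Then the closed-loop system is voltage stable: for any $\mathbf{v}^{env}\in\mathbb{R}^n$ and any initial condition $\mathbf{v}(0)\in\mathbb{R}^n$,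 the trajectory satisfies $\lim_{t\to\infty}\mathrm{dist}(\mathbf{v}(t),S_v)=0$, where $S_v=\{\mathbf{v}\in\mathbb{R}^n:\underline{v}_i\le v_i\le \bar{v}_i \text{ for all } i\}$ and $\mathrm{dist}(\mathbf{v},S_v)=\min_{\mathbf{v}'\in S_v}\|\mathbf{v}-\mathbf{v}'\|$.
   Context: This is the linearized (Simplified DistFlow) model of a radial power distribution network: the voltage vector equals $X\mathbf{q}+\mathbf{v}^{env}$, where $\mathbf{v}^{env}$ collects the uncontrollable contributions (from active power injections and substation voltage), and each node's controller sets the rate of change of its reactive power injection as a function of its own local voltage only. In the paper the policies $g_i$ are parameterized as $g_{i,\theta_i}$ with parameters $\theta_i$; the parameterization plays no role in the statement. *)

theory Defs
  imports "HOL-Analysis.Analysis"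
begin

text \<open>A radial network (tree) rooted at the substation node 0 is encoded by a parent map on the
  non-substation nodes 'n (the set N): par i = None means the parent of i is the substation 0,
  par i = Some j means the parent is node j. The line (par i, i) is identified with its child node i.\<close>

fun par_iter :: "('n \<Rightarrow> 'n option) \<Rightarrow> nat \<Rightarrow> 'n \<Rightarrow> 'n option" where
  "par_iter par 0 i = Some i"
| "par_iter par (Suc k) i = Option.bind (par_iter par k i) par"

definition is_radial :: "('n \<Rightarrow> 'n option) \<Rightarrow> bool" where
  "is_radial par \<longleftrightarrow> (\<forall>i. \<exists>k. par_iter par k i = None)"

definition path_lines :: "('n \<Rightarrow> 'n option) \<Rightarrow> 'n \<Rightarrow> 'n set" where
  "path_lines par i = {j. \<exists>k. par_iter par k i = Some j}"

definition reactance_matrix :: "('n::finite \<Rightarrow> 'n option) \<Rightarrow> ('n \<Rightarrow> real) \<Rightarrow> real^'n^'n" where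
  "reactance_matrix par x = (\<chi> i j. 2 * (\<Sum>e\<in>path_lines par i \<inter> path_lines par j. x e))"

definition safe_set :: "('n::finite \<Rightarrow> real) \<Rightarrow> ('n \<Rightarrow> real) \<Rightarrow> (real^'n) set" where
  "safe_set vlo vhi = {v. \<forall>i. vlo i \<le> v $ i \<and> v $ i \<le> vhi i}"

end

theory Submission imports Defs begin

lemma global_primitive:
  fixes f :: "real \<Rightarrow> real"
  assumes "\<And>x. isCont f x"
  shows "\<exists>F. \<forall>s. (F has_real_derivative f s) (at s)"
proof -
  have "\<exists>F. \<forall>x :: real. (-\<infinity>::ereal) < x \<longrightarrow> x < \<infinity> \<longrightarrow> (F has_vector_derivative f x) (at x)"
    by (rule einterval_antiderivative) (use assms in auto)
  then show ?thesis by (auto simp: has_real_derivative_iff_has_vector_derivative)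
qed

lemma primitive_props:
  fixes g F :: "real \<Rightarrow> real"
  assumes bnd: "lo \<le> hi"
    and dead: "\<And>v. lo \<le> v \<Longrightarrow> v \<le> hi \<Longrightarrow> g v = 0"
    and declo: "\<And>a b. a < b \<Longrightarrow> b \<le> lo \<Longrightarrow> g a > g b"
    and dechi: "\<And>a b. hi \<le> a \<Longrightarrow> a < b \<Longrightarrow> g a > g b"
    and der: "\<And>s. (F has_real_derivative - g s) (at s)"
    and F0: "F lo = 0"
  shows "F s \<ge> 0"
    and "s \<ge> hi + 1 \<Longrightarrow> F s \<ge> (- g (hi + 1)) * (s - (hi + 1))"
    and "s \<le> lo - 1 \<Longrightarrow> F s \<ge> g (lo - 1) * ((lo - 1) - s)"
proof -
  have mvt: "\<exists>z. a < z \<and> z < b \<and> F b - F a = (b - a) * (- g z)" if "a < b" for a b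
    using MVT2[OF that, of F "\<lambda>z. - g z"] der by blast
  have mid: "F s = 0" if h: "lo \<le> s" "s \<le> hi" for s
  proof (cases "lo = s")
    case False
    then obtain z where "lo < z" "z < s" "F s - F lo = (s - lo) * (- g z)"
      using mvt[of lo s] h by auto
    then show ?thesis using dead[of z] h F0 by auto
  qed (use F0 in auto)
  have up: "F s \<ge> 0" if h: "hi < s" for s
  proof -
    obtain z where "hi < z" "z < s" "F s - F hi = (s - hi) * (- g z)"
      using mvt[of hi s] h by auto
    moreover have "g z < 0" using dechi[of hi z] dead[of hi] bnd \<open>hi < z\<close> by auto
    ultimately have "(s - hi) * (- g z) > 0" "F s - F hi = (s - hi) * (- g z)" using h by (auto simp: mult_pos_neg)
    then show ?thesis using mid[of hi] bnd by linarith
  qed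
  have down: "F s \<ge> 0" if h: "s < lo" for s
  proof -
    obtain z where "s < z" "z < lo" "F lo - F s = (lo - s) * (- g z)"
      using mvt[of s lo] h by auto
    moreover have "g z > 0" using declo[of z lo] dead[of lo] bnd \<open>z < lo\<close> by auto
    ultimately have "(lo - s) * (- g z) < 0" "F lo - F s = (lo - s) * (- g z)" using h by (auto simp: mult_pos_neg mult_pos_pos)
    then show ?thesis using F0 by linarith
  qed
  show nn: "F s \<ge> 0" for s
    using up[of s] down[of s] mid[of s] by (cases "s < lo"; cases "hi < s") auto
  show "s \<ge> hi + 1 \<Longrightarrow> F s \<ge> (- g (hi + 1)) * (s - (hi + 1))"
  proof -
    assume s: "s \<ge> hi + 1"
    show ?thesis
    proof (cases "s = hi + 1")
      case True then show ?thesis using nn[of s] by simp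
    next
      case False
      then obtain z where z: "hi + 1 < z" "z < s" "F s - F (hi+1) = (s - (hi+1)) * (- g z)"
        using mvt[of "hi+1" s] s by auto
      have "g z < g (hi + 1)" using dechi[of "hi+1" z] z by auto
      then have m: "(- g (hi + 1)) * (s - (hi + 1)) \<le> (- g z) * (s - (hi + 1))"
        using s by (intro mult_right_mono) auto
      have e: "F s - F (hi+1) = (- g z) * (s - (hi + 1))" using z(3) by (simp only: mult.commute)
      show ?thesis using m e nn[of "hi+1"] by linarith
    qed
  qed
  show "s \<le> lo - 1 \<Longrightarrow> F s \<ge> g (lo - 1) * ((lo - 1) - s)"
  proof -
    assume s: "s \<le> lo - 1"
    show ?thesis
    proof (cases "s = lo - 1")
      case True then show ?thesis using nn[of s] by simp
    next
      case False
      then obtain z where z: "s < z" "z < lo - 1" "F (lo - 1) - F s = ((lo - 1) - s) * (- g z)"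
        using mvt[of s "lo - 1"] s by auto
      have "g z > g (lo - 1)" using declo[of z "lo - 1"] z by auto
      then have m: "g (lo - 1) * ((lo - 1) - s) \<le> g z * ((lo - 1) - s)"
        using s by (intro mult_right_mono) auto
      have e: "F (lo - 1) - F s = - (g z * ((lo - 1) - s))" using z(3) by (simp add: mult.commute)
      show ?thesis using m e nn[of "lo - 1"] by linarith
    qed
  qed
qed



lemma par_iter_add: "par_iter par (k + m) i = Option.bind (par_iter par k i) (par_iter par m)"
  by (induction m) (auto simp: Option.bind_assoc)

definition depth :: "('n \<Rightarrow> 'n option) \<Rightarrow> 'n \<Rightarrow> nat" where
  "depth par i = (LEAST k. par_iter par k i = None)"

lemma depth_lt:
  assumes tree: "is_radial par" and e: "e \<in> path_lines par i" and ne: "e \<noteq> i"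
  shows "depth par e < depth par i"
proof (rule ccontr)
  assume "\<not> ?thesis"
  then have le: "depth par i \<le> depth par e" by simp
  obtain k where k: "par_iter par k i = Some e" using e by (auto simp: path_lines_def)
  have k0: "k \<noteq> 0" using k ne by (cases k) auto
  have none_i: "par_iter par (depth par i) i = None"
    unfolding depth_def by (rule LeastI_ex) (use tree in \<open>auto simp: is_radial_def\<close>)
  have ne_e: "par_iter par m e \<noteq> None" if "m < depth par e" for m
    using not_less_Least[of m "\<lambda>k. par_iter par k e = None"] that by (auto simp: depth_def)
  show False
  proof (cases "depth par i \<le> k")
    case True
    have "par_iter par k i = par_iter par (depth par i + (k - depth par i)) i" using True by simp
    also have "\<dots> = None" by (simp only: par_iter_add none_i) simp
    finally show False using k by simp
  next
    case False
    have "par_iter par (depth par i) i = par_iter par (k + (depth par i - k)) i" using False by simp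
    also have "\<dots> = par_iter par (depth par i - k) e" by (simp only: par_iter_add k) simp
    moreover have "depth par i - k < depth par e" using le k0 False by arith
    ultimately show False using none_i ne_e[of "depth par i - k"] by auto
  qed
qed

lemma self_in_path: "i \<in> path_lines par i"
  unfolding path_lines_def by (rule CollectI, rule exI[of _ 0]) simp

lemma quad_expand:
  fixes y :: "real^'n::finite"
  shows "y \<bullet> (reactance_matrix par x *v y)
       = 2 * (\<Sum>e\<in>UNIV. x e * (\<Sum>i\<in>{i. e \<in> path_lines par i}. y$i)\<^sup>2)"
proof -
  let ?P = "path_lines par"
  define ind where "ind e i = (if e \<in> ?P i then 1 else 0 :: real)" for e i
  have 1: "(\<Sum>e\<in>?P i \<inter> ?P j. x e) = (\<Sum>e\<in>UNIV. ind e i * ind e j * x e)" for i j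
  proof -
    have "(\<Sum>e\<in>UNIV. ind e i * ind e j * x e) = (\<Sum>e\<in>UNIV. if e \<in> ?P i \<inter> ?P j then x e else 0)"
      by (rule sum.cong) (auto simp: ind_def)
    also have "\<dots> = (\<Sum>e\<in>?P i \<inter> ?P j. x e)"
      by (simp add: sum.If_cases) (rule sum.cong; auto)
    finally show ?thesis by simp
  qed
  have 2: "(\<Sum>i\<in>{i. e \<in> ?P i}. y$i) = (\<Sum>i\<in>UNIV. ind e i * y$i)" for e
  proof -
    have "(\<Sum>i\<in>UNIV. ind e i * y$i) = (\<Sum>i\<in>UNIV. if i \<in> {i. e \<in> ?P i} then y$i else 0)"
      by (rule sum.cong) (auto simp: ind_def)
    also have "\<dots> = (\<Sum>i\<in>{i. e \<in> ?P i}. y$i)"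
      by (simp add: sum.If_cases)
    finally show ?thesis by simp
  qed
  have "y \<bullet> (reactance_matrix par x *v y) =
      (\<Sum>i\<in>UNIV. \<Sum>j\<in>UNIV. \<Sum>e\<in>UNIV. 2 * (x e * ((ind e i * y$i) * (ind e j * y$j))))"
    unfolding inner_vec_def matrix_vector_mult_def reactance_matrix_def 1
    by (simp add: sum_distrib_left sum_distrib_right mult_ac)
  also have "\<dots> = (\<Sum>e\<in>UNIV. \<Sum>i\<in>UNIV. \<Sum>j\<in>UNIV. 2 * (x e * ((ind e i * y$i) * (ind e j * y$j))))"
    by (subst sum.swap, rule sum.cong, rule refl, rule sum.swap)
  also have "\<dots> = 2 * (\<Sum>e\<in>UNIV. \<Sum>i\<in>UNIV. \<Sum>j\<in>UNIV. x e * ((ind e i * y$i) * (ind e j * y$j)))"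
    by (simp add: sum_distrib_left)
  also have "\<dots> = 2 * (\<Sum>e\<in>UNIV. x e * (\<Sum>i\<in>UNIV. ind e i * y$i)\<^sup>2)"
  proof -
    have 3: "x e * (\<Sum>i\<in>UNIV. ind e i * y$i)\<^sup>2 = (\<Sum>i\<in>UNIV. \<Sum>j\<in>UNIV. x e * ((ind e i * y$i) * (ind e j * y$j)))" for e
      unfolding power2_eq_square sum_product by (simp only: sum_distrib_left)
    show ?thesis by (simp only: 3)
  qed
  finally show ?thesis unfolding 2 .
qed

lemma quad_pos:
  fixes y :: "real^'n::finite"
  assumes tree: "is_radial par" and xpos: "\<And>e. x e > 0" and y: "y \<noteq> 0"
  shows "y \<bullet> (reactance_matrix par x *v y) > 0"
proof (rule ccontr)
  let ?P = "path_lines par"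
  let ?s = "\<lambda>e. (\<Sum>i\<in>{i. e \<in> ?P i}. y$i)"
  assume "\<not> ?thesis"
  then have le: "(\<Sum>e\<in>UNIV. x e * (?s e)\<^sup>2) \<le> 0" by (simp add: quad_expand)
  have nn: "\<forall>e\<in>UNIV. 0 \<le> x e * (?s e)\<^sup>2" using xpos by (simp add: less_imp_le)
  then have "(\<Sum>e\<in>UNIV. x e * (?s e)\<^sup>2) = 0" using le sum_nonneg[of UNIV] by (meson antisym)
  then have "\<forall>e\<in>UNIV. x e * (?s e)\<^sup>2 = 0" using nn by (simp add: sum_nonneg_eq_0_iff)
  then have "x e * (?s e)\<^sup>2 = 0" for e by blast
  then have s0: "?s e = 0" for e using xpos[of e] by (metis less_irrefl mult_eq_0_iff zero_eq_power2)
  define S where "S = {i. y$i \<noteq> 0}"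
  have "S \<noteq> {}" using y by (auto simp: S_def vec_eq_iff)
  then obtain e where eS: "e \<in> S" and emax: "\<And>i. i \<in> S \<Longrightarrow> depth par i \<le> depth par e"
    using Max_in[of "depth par ` S"] Max_ge[of "depth par ` S"] by fastforce
  have z: "y$i = 0" if "i \<in> {i. e \<in> ?P i} - {e}" for i
  proof (rule ccontr)
    assume "y$i \<noteq> 0"
    then have "i \<in> S" by (simp add: S_def)
    moreover have "depth par e < depth par i" using depth_lt[OF tree, of e i] that by auto
    ultimately show False using emax by force
  qed
  have "?s e = y$e + (\<Sum>i\<in>{i. e \<in> ?P i} - {e}. y$i)"
    by (rule sum.remove) (auto simp: self_in_path)
  also have "\<dots> = y$e" using z by simp
  finally show False using s0[of e] eS by (simp add: S_def)
qed

lemma quad_coercive: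
  assumes tree: "is_radial par" and xpos: "\<And>e. x e > 0"
  shows "\<exists>c>0. \<forall>y::real^'n::finite. y \<bullet> (reactance_matrix par x *v y) \<ge> c * (norm y)\<^sup>2"
proof -
  let ?Q = "\<lambda>y::real^'n. y \<bullet> (reactance_matrix par x *v y)"
  have cont: "continuous_on (sphere 0 1) ?Q"
    by (intro continuous_intros linear_continuous_on matrix_vector_mul_bounded_linear)
  obtain u :: "real^'n" where "norm u = 1" using vector_choose_size[of 1] by auto
  then have ne: "sphere (0::real^'n) 1 \<noteq> {}" by auto
  obtain y0 where y0: "y0 \<in> sphere 0 1" and min: "\<And>y. y \<in> sphere 0 1 \<Longrightarrow> ?Q y0 \<le> ?Q y"
    using continuous_attains_inf[OF compact_sphere ne cont] by blast
  have "y0 \<noteq> 0" using y0 by auto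
  then have pos: "?Q y0 > 0" by (rule quad_pos[OF tree xpos])
  have "?Q y \<ge> ?Q y0 * (norm y)\<^sup>2" for y
  proof (cases "y = 0")
    case False
    define u where "u = (1 / norm y) *\<^sub>R y"
    have u: "u \<in> sphere 0 1" using False by (simp add: u_def)
    have yu: "y = norm y *\<^sub>R u" using False by (simp add: u_def)
    have "?Q y = (norm y)\<^sup>2 * ?Q u"
      by (subst yu, subst yu) (simp add: matrix_vector_mult_scaleR power2_eq_square)
    moreover have "(norm y)\<^sup>2 * ?Q y0 \<le> (norm y)\<^sup>2 * ?Q u"
      by (rule mult_left_mono[OF min[OF u]]) simp
    ultimately show ?thesis by (simp add: mult.commute)
  qed simp
  then show ?thesis using pos by blast
qed

lemma mvt_within:
  fixes f f' :: "real \<Rightarrow> real"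
  assumes ab: "a \<le> b"
    and der: "\<And>z. a \<le> z \<Longrightarrow> z \<le> b \<Longrightarrow> (f has_real_derivative f' z) (at z within S)"
    and sub: "{a..b} \<subseteq> S"
  shows "\<exists>z. a \<le> z \<and> z \<le> b \<and> f b - f a = f' z * (b - a)"
proof -
  have "\<exists>z\<in>{a..b}. f b - f a = (*) (f' z) (b - a)"
    by (rule mvt_very_simple[OF ab])
       (rule has_field_derivative_imp_has_derivative, rule DERIV_subset[OF der sub]; simp)
  then show ?thesis by auto
qed

theorem theorem1:
  fixes par :: "'n::finite \<Rightarrow> 'n option"
    and x :: "'n \<Rightarrow> real"
    and vlo vhi :: "'n \<Rightarrow> real"
    and g :: "'n \<Rightarrow> real \<Rightarrow> real"
    and venv :: "real^'n"
    and q :: "real \<Rightarrow> real^'n"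
  assumes tree: "is_radial par"
    and react_pos: "\<And>e. x e > 0"
    and bounds: "\<And>i. vlo i \<le> vhi i"
    and g_C1: "\<And>i. g i C1_differentiable_on UNIV"
    and g_dead: "\<And>i v. vlo i \<le> v \<Longrightarrow> v \<le> vhi i \<Longrightarrow> g i v = 0"
    and g_dec_lo: "\<And>i a b. a < b \<Longrightarrow> b \<le> vlo i \<Longrightarrow> g i a > g i b"
    and g_dec_hi: "\<And>i a b. vhi i \<le> a \<Longrightarrow> a < b \<Longrightarrow> g i a > g i b"
    and g_unbdd: "\<And>i. filterlim (\<lambda>v. \<bar>g i v\<bar>) at_top at_top"
    and traj: "\<And>t. t \<ge> 0 \<Longrightarrow>
       (q has_vector_derivative
          (\<chi> i. g i ((reactance_matrix par x *v q t + venv) $ i))) (at t within {0..})"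
  shows "((\<lambda>t. infdist (reactance_matrix par x *v q t + venv) (safe_set vlo vhi))
            \<longlongrightarrow> 0) at_top"
proof -
  define M where "M = reactance_matrix par x"
  define v where "v t = M *v q t + venv" for t
  define G where "G t = (\<chi> i. g i (v t $ i))" for t
  define D where "D t = G t \<bullet> (M *v G t)" for t
  have traj': "(q has_vector_derivative G t) (at t within {0..})" if "t \<ge> 0" for t
    using traj[OF that] by (simp add: G_def v_def M_def)
  have gcont: "isCont (g i) s" for i s
  proof -
    have "g i differentiable at s" using g_C1[of i] by (simp add: C1_differentiable_on_eq)
    then show ?thesis by (simp add: differentiable_imp_continuous_within)
  qed
  have "\<forall>i. \<exists>F. \<forall>s. (F has_real_derivative - g i s) (at s)"
    by (intro allI global_primitive) (intro continuous_intros gcont)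
  then obtain F where F: "\<And>i s. (F i has_real_derivative - g i s) (at s)" by metis
  define \<Phi> where "\<Phi> i s = F i s - F i (vlo i)" for i s
  have \<Phi>der: "(\<Phi> i has_real_derivative - g i s) (at s)" for i s
    unfolding \<Phi>_def using DERIV_diff[OF F[of i s] DERIV_const[of "F i (vlo i)"]] by simp
  have \<Phi>0: "\<Phi> i (vlo i) = 0" for i by (simp add: \<Phi>_def)
  have \<Phi>nn: "\<Phi> i s \<ge> 0" for i s
    by (rule primitive_props(1)[OF bounds[of i] g_dead[where i=i] g_dec_lo[where i=i] g_dec_hi[where i=i] \<Phi>der[of i] \<Phi>0[of i]])
  have PP2: "\<Phi> i s \<ge> (- g i (vhi i + 1)) * (s - (vhi i + 1))" if "s \<ge> vhi i + 1" for i s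
    by (rule primitive_props(2)[OF bounds[of i] g_dead[where i=i] g_dec_lo[where i=i] g_dec_hi[where i=i] \<Phi>der[of i] \<Phi>0[of i] that])
  have PP3: "\<Phi> i s \<ge> g i (vlo i - 1) * ((vlo i - 1) - s)" if "s \<le> vlo i - 1" for i s
    by (rule primitive_props(3)[OF bounds[of i] g_dead[where i=i] g_dec_lo[where i=i] g_dec_hi[where i=i] \<Phi>der[of i] \<Phi>0[of i] that])
  obtain c where c: "c > 0" "\<And>y. y \<bullet> (M *v y) \<ge> c * (norm y)\<^sup>2"
    using quad_coercive[of par x, OF tree react_pos] by (auto simp: M_def)
  have Dnn: "D t \<ge> 0" for t
    using c(2)[of "G t"] c(1) unfolding D_def by (smt (verit) mult_nonneg_nonneg zero_le_power2)
  have vder: "((\<lambda>t. v t $ i) has_real_derivative (M *v G t) $ i) (at t within {0..})"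
    if "t \<ge> 0" for t i
  proof -
    have bl: "bounded_linear (\<lambda>y. (M *v y) $ i)"
      by (rule bounded_linear_compose[OF bounded_linear_vec_nth matrix_vector_mul_bounded_linear])
    have "((\<lambda>t. (M *v q t) $ i) has_vector_derivative (M *v G t) $ i) (at t within {0..})"
      by (rule bounded_linear.has_vector_derivative[OF bl traj'[OF that]])
    then have "((\<lambda>t. (M *v q t) $ i + venv $ i) has_vector_derivative (M *v G t) $ i) (at t within {0..})"
      by (simp only: has_vector_derivative_add_const)
    then show ?thesis
      by (simp add: v_def has_real_derivative_iff_has_vector_derivative)
  qed
  define W where "W t = (\<Sum>i\<in>UNIV. \<Phi> i (v t $ i))" for t
  have Wder: "(W has_real_derivative - D t) (at t within {0..})" if "t \<ge> 0" for t
  proof -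
    have "((\<lambda>t. \<Sum>i\<in>UNIV. \<Phi> i (v t $ i)) has_real_derivative
            (\<Sum>i\<in>UNIV. - g i (v t $ i) * (M *v G t) $ i)) (at t within {0..})"
      by (rule DERIV_sum, rule DERIV_chain2[OF \<Phi>der vder[OF that]])
    moreover have "(\<Sum>i\<in>UNIV. - g i (v t $ i) * (M *v G t) $ i) = - D t"
      by (simp add: D_def inner_vec_def G_def sum_negf)
    ultimately show ?thesis by (simp add: W_def[abs_def])
  qed
  have Wmono: "W t \<le> W s" if h: "0 \<le> s" "s \<le> t" for s t
  proof -
    obtain z where "s \<le> z" "z \<le> t" "W t - W s = - D z * (t - s)"
      using mvt_within[OF h(2), of W "\<lambda>z. - D z" "{0..}"] Wder h by auto
    moreover have "D z * (t - s) \<ge> 0" using Dnn[of z] h by simp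
    ultimately show ?thesis by simp
  qed
  have Wnn: "W t \<ge> 0" for t unfolding W_def by (intro sum_nonneg) (simp add: \<Phi>nn)
  have \<Phi>le: "\<Phi> i (v t $ i) \<le> W 0" if "t \<ge> 0" for i t
  proof -
    have "\<Phi> i (v t $ i) \<le> W t" unfolding W_def
      by (rule member_le_sum) (auto simp: \<Phi>nn)
    also have "\<dots> \<le> W 0" using Wmono[of 0 t] that by simp
    finally show ?thesis .
  qed
  define lo' where "lo' i = vlo i - 1 - W 0 / g i (vlo i - 1)" for i
  define hi' where "hi' i = vhi i + 1 + W 0 / (- g i (vhi i + 1))" for i
  have gpos_lo: "g i (vlo i - 1) > 0" for i
    using g_dec_lo[of "vlo i - 1" "vlo i" i] g_dead[of i "vlo i"] bounds[of i] by simp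
  have gneg_hi: "- g i (vhi i + 1) > 0" for i
    using g_dec_hi[of i "vhi i" "vhi i + 1"] g_dead[of i "vhi i"] bounds[of i] by simp
  have W0nn: "W 0 \<ge> 0" by (rule Wnn)
  have lo'le: "lo' i \<le> vlo i - 1" for i
    unfolding lo'_def using gpos_lo[of i] W0nn by (simp add: divide_nonneg_pos)
  have hi'ge: "hi' i \<ge> vhi i + 1" for i
    unfolding hi'_def using gneg_hi[of i] W0nn by (simp add: divide_nonneg_pos divide_nonneg_neg)
  have vbound: "lo' i \<le> v t $ i \<and> v t $ i \<le> hi' i" if "t \<ge> 0" for i t
  proof
    show "v t $ i \<le> hi' i"
    proof (rule ccontr)
      assume "\<not> ?thesis"
      then have s: "v t $ i > hi' i" by simp
      then have "v t $ i \<ge> vhi i + 1" using hi'ge[of i] by simp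
      then have "\<Phi> i (v t $ i) \<ge> (- g i (vhi i + 1)) * (v t $ i - (vhi i + 1))" by (rule PP2)
      moreover have "(- g i (vhi i + 1)) * (v t $ i - (vhi i + 1)) > W 0"
      proof -
        have "W 0 / (- g i (vhi i + 1)) < v t $ i - (vhi i + 1)" using s unfolding hi'_def by linarith
        then have "W 0 < (v t $ i - (vhi i + 1)) * (- g i (vhi i + 1))"
          by (simp only: pos_divide_less_eq[OF gneg_hi[of i]])
        then show ?thesis by (simp only: mult.commute)
      qed
      ultimately show False using \<Phi>le[OF that, of i] by simp
    qed
    show "lo' i \<le> v t $ i"
    proof (rule ccontr)
      assume "\<not> ?thesis"
      then have s: "v t $ i < lo' i" by simp
      then have "v t $ i \<le> vlo i - 1" using lo'le[of i] by simp
      then have "\<Phi> i (v t $ i) \<ge> g i (vlo i - 1) * ((vlo i - 1) - v t $ i)" by (rule PP3)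
      moreover have "g i (vlo i - 1) * ((vlo i - 1) - v t $ i) > W 0"
      proof -
        have "W 0 / g i (vlo i - 1) < (vlo i - 1) - v t $ i" using s unfolding lo'_def by linarith
        then have "W 0 < ((vlo i - 1) - v t $ i) * g i (vlo i - 1)"
          by (simp only: pos_divide_less_eq[OF gpos_lo[of i]])
        then show ?thesis by (simp only: mult.commute)
      qed
      ultimately show False using \<Phi>le[OF that, of i] by simp
    qed
  qed
  define Cg where "Cg i = g i (lo' i) - g i (hi' i)" for i
  have gbound: "\<bar>g i s\<bar> \<le> Cg i" if "lo' i \<le> s" "s \<le> hi' i" for i s
  proof -
    have a: "g i (lo' i) \<ge> 0"
      using g_dec_lo[of "lo' i" "vlo i - 1" i] gpos_lo[of i] lo'le[of i]
      by (cases "lo' i = vlo i - 1") auto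
    have b: "g i (hi' i) \<le> 0"
      using g_dec_hi[of i "vhi i + 1" "hi' i"] gneg_hi[of i] hi'ge[of i]
      by (cases "hi' i = vhi i + 1") auto
    consider "s < vlo i" | "vlo i \<le> s \<and> s \<le> vhi i" | "vhi i < s" by linarith
    then show ?thesis
    proof cases
      case 1
      have "g i s > 0" using g_dec_lo[of s "vlo i" i] g_dead[of i "vlo i"] bounds[of i] 1 by simp
      moreover have "g i s \<le> g i (lo' i)"
        using g_dec_lo[of "lo' i" s i] that 1 by (cases "lo' i = s") auto
      ultimately show ?thesis using b by (simp add: Cg_def)
    next
      case 2 then show ?thesis using g_dead[of i s] a b by (simp add: Cg_def)
    next
      case 3
      have "g i s < 0" using g_dec_hi[of i "vhi i" s] g_dead[of i "vhi i"] bounds[of i] 3 by simp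
      moreover have "g i s \<ge> g i (hi' i)"
        using g_dec_hi[of i s "hi' i"] that 3 by (cases "hi' i = s") auto
      ultimately show ?thesis using a by (simp add: Cg_def)
    qed
  qed
  obtain K where K: "K > 0" "\<And>y. norm (M *v y) \<le> norm y * K"
    using bounded_linear.pos_bounded[OF matrix_vector_mul_bounded_linear[of M]] by blast
  define L where "L = (\<Sum>j\<in>UNIV. Cg j) * K + 1"
  have Gnorm: "norm (G t) \<le> (\<Sum>j\<in>UNIV. Cg j)" if "t \<ge> 0" for t
  proof -
    have "norm (G t) \<le> (\<Sum>j\<in>UNIV. \<bar>G t $ j\<bar>)" by (rule norm_le_l1_cart)
    also have "\<dots> \<le> (\<Sum>j\<in>UNIV. Cg j)"
      by (rule sum_mono) (use vbound[OF that] gbound in \<open>auto simp: G_def\<close>)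
    finally show ?thesis .
  qed
  have Lpos: "L > 0"
  proof -
    have "0 \<le> (\<Sum>j\<in>UNIV. Cg j)" using Gnorm[of 0] norm_ge_zero[of "G 0"] by linarith
    then have "0 \<le> (\<Sum>j\<in>UNIV. Cg j) * K" using K(1) by simp
    then show ?thesis unfolding L_def by linarith
  qed
  have vdbound: "\<bar>(M *v G t) $ i\<bar> \<le> L" if "t \<ge> 0" for t i
  proof -
    have "\<bar>(M *v G t) $ i\<bar> \<le> norm (M *v G t)" by (rule component_le_norm_cart)
    also have "\<dots> \<le> norm (G t) * K" by (rule K(2))
    also have "\<dots> \<le> (\<Sum>j\<in>UNIV. Cg j) * K" using Gnorm[OF that] K(1) by (simp add: mult_right_mono)
    finally show ?thesis unfolding L_def by simp
  qed
  have vlip: "\<bar>v s $ i - v t $ i\<bar> \<le> L * (s - t)" if h: "0 \<le> t" "t \<le> s" for s t i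
  proof -
    obtain z where z: "t \<le> z" "z \<le> s" "v s $ i - v t $ i = (M *v G z) $ i * (s - t)"
      using mvt_within[OF h(2), of "\<lambda>t. v t $ i" "\<lambda>z. (M *v G z) $ i" "{0..}"] vder h by auto
    have "\<bar>(M *v G z) $ i * (s - t)\<bar> = \<bar>(M *v G z) $ i\<bar> * (s - t)" using h by (simp add: abs_mult)
    also have "\<dots> \<le> L * (s - t)" using vdbound[of z i] z h by (simp add: mult_right_mono)
    finally show ?thesis using z by simp
  qed
  define d where "d i s = max 0 (max (vlo i - s) (s - vhi i))" for i s
  have dconv: "\<exists>T. \<forall>t\<ge>T. d i (v t $ i) < \<epsilon>" if "\<epsilon> > 0" for i \<epsilon>
  proof (rule ccontr)
    assume "\<not> ?thesis"
    then have bad: "\<And>T. \<exists>t\<ge>T. d i (v t $ i) \<ge> \<epsilon>" by (meson not_le)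
    define \<eta> where "\<eta> = min (g i (vlo i - \<epsilon>/2)) (- g i (vhi i + \<epsilon>/2))"
    have \<eta>pos: "\<eta> > 0"
      using g_dec_lo[of "vlo i - \<epsilon>/2" "vlo i" i] g_dec_hi[of i "vhi i" "vhi i + \<epsilon>/2"]
        g_dead[of i "vlo i"] g_dead[of i "vhi i"] bounds[of i] that
      by (simp add: \<eta>_def)
    have gbig: "\<bar>g i s\<bar> \<ge> \<eta>" if "d i s \<ge> \<epsilon>/2" for s
    proof -
      have "s \<le> vlo i - \<epsilon>/2 \<or> s \<ge> vhi i + \<epsilon>/2"
        using that \<open>\<epsilon> > 0\<close> unfolding d_def max_def by (auto split: if_splits)
      then show ?thesis
      proof
        assume s: "s \<le> vlo i - \<epsilon>/2"
        have "g i s \<ge> g i (vlo i - \<epsilon>/2)"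
          using g_dec_lo[of s "vlo i - \<epsilon>/2" i] s \<open>\<epsilon> > 0\<close> by (cases "s = vlo i - \<epsilon>/2") auto
        then show ?thesis using \<eta>pos by (simp add: \<eta>_def)
      next
        assume s: "s \<ge> vhi i + \<epsilon>/2"
        have "g i s \<le> g i (vhi i + \<epsilon>/2)"
          using g_dec_hi[of i "vhi i + \<epsilon>/2" s] s \<open>\<epsilon> > 0\<close> bounds[of i]
          by (cases "s = vhi i + \<epsilon>/2") auto
        then show ?thesis using \<eta>pos by (simp add: \<eta>_def)
      qed
    qed
    define \<kappa> where "\<kappa> = c * \<eta>\<^sup>2"
    have \<kappa>pos: "\<kappa> > 0" using c(1) \<eta>pos by (simp add: \<kappa>_def)
    have Dbig: "D t \<ge> \<kappa>" if "d i (v t $ i) \<ge> \<epsilon>/2" for t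
    proof -
      have "\<eta> \<le> \<bar>G t $ i\<bar>" using gbig[OF that] by (simp add: G_def)
      also have "\<dots> \<le> norm (G t)" by (rule component_le_norm_cart)
      finally have "\<eta>\<^sup>2 \<le> (norm (G t))\<^sup>2" using \<eta>pos by (simp add: power_mono)
      then have "\<kappa> \<le> c * (norm (G t))\<^sup>2" unfolding \<kappa>_def using c(1) by simp
      also have "\<dots> \<le> D t" unfolding D_def by (rule c(2))
      finally show ?thesis .
    qed
    define \<delta> where "\<delta> = \<epsilon> / (2 * L)"
    have \<delta>pos: "\<delta> > 0" using Lpos that by (simp add: \<delta>_def)
    have drop: "W (t + \<delta>) \<le> W t - \<kappa> * \<delta>" if t0: "t \<ge> 0" and dt: "d i (v t $ i) \<ge> \<epsilon>" for t
    proof -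
      obtain z where z: "t \<le> z" "z \<le> t + \<delta>" "W (t + \<delta>) - W t = - D z * (t + \<delta> - t)"
        using mvt_within[of t "t + \<delta>" W "\<lambda>z. - D z" "{0..}"] Wder \<delta>pos t0 by auto
      have "\<bar>v z $ i - v t $ i\<bar> \<le> L * (z - t)" by (rule vlip) (use z t0 in auto)
      also have "\<dots> \<le> L * \<delta>" using z Lpos by (simp add: mult_left_mono)
      also have "\<dots> = \<epsilon> / 2" using Lpos by (simp add: \<delta>_def)
      finally have "\<bar>v z $ i - v t $ i\<bar> \<le> \<epsilon> / 2" .
      then have "v z $ i \<ge> v t $ i - \<epsilon>/2" "v z $ i \<le> v t $ i + \<epsilon>/2" by linarith+
      then have "d i (v z $ i) \<ge> \<epsilon> / 2" using dt unfolding d_def max_def by (auto split: if_splits)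
      then have "D z \<ge> \<kappa>" by (rule Dbig)
      then have "D z * \<delta> \<ge> \<kappa> * \<delta>" using \<delta>pos by (simp add: mult_right_mono)
      then show ?thesis using z(3) by simp
    qed
    define m where "m = Inf (W ` {0..})"
    have bdd: "bdd_below (W ` {0..})" using Wnn by (auto intro: bdd_belowI[of _ 0])
    have "Inf (W ` {0..}) < m + \<kappa> * \<delta>" using \<kappa>pos \<delta>pos by (simp add: m_def)
    then obtain t0 where t0: "t0 \<ge> 0" "W t0 < m + \<kappa> * \<delta>"
      using cInf_lessD[of "W ` {0..}"] by auto
    obtain t where t: "t \<ge> t0" "d i (v t $ i) \<ge> \<epsilon>" using bad by blast
    have "W (t + \<delta>) \<le> W t - \<kappa> * \<delta>" by (rule drop) (use t t0 in auto)
    also have "\<dots> \<le> W t0 - \<kappa> * \<delta>" using Wmono[of t0 t] t t0 by simp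
    also have "\<dots> < m" using t0 by simp
    also have "m \<le> W (t + \<delta>)" unfolding m_def
      by (rule cInf_lower[OF _ bdd]) (use t t0 \<delta>pos in auto)
    finally show False by simp
  qed
  have dlim: "((\<lambda>t. d i (v t $ i)) \<longlongrightarrow> 0) at_top" for i
  proof (rule tendstoI)
    fix \<epsilon> :: real assume "\<epsilon> > 0"
    then obtain T where "\<forall>t\<ge>T. d i (v t $ i) < \<epsilon>" using dconv by blast
    then show "\<forall>\<^sub>F t in at_top. dist (d i (v t $ i)) 0 < \<epsilon>"
      unfolding eventually_at_top_linorder by (auto simp: d_def)
  qed
  have sumlim: "((\<lambda>t. \<Sum>i\<in>UNIV. d i (v t $ i)) \<longlongrightarrow> 0) at_top"
    using tendsto_sum[of UNIV "\<lambda>i t. d i (v t $ i)" "\<lambda>_. 0" at_top] dlim by simp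
  have upper: "infdist (v t) (safe_set vlo vhi) \<le> (\<Sum>i\<in>UNIV. d i (v t $ i))" for t
  proof -
    define p where "p = (\<chi> i. max (vlo i) (min (vhi i) (v t $ i)))"
    have "p \<in> safe_set vlo vhi" using bounds by (auto simp: p_def safe_set_def)
    then have "infdist (v t) (safe_set vlo vhi) \<le> dist (v t) p" by (rule infdist_le)
    also have "\<dots> = norm (v t - p)" by (simp add: dist_norm)
    also have "\<dots> \<le> (\<Sum>i\<in>UNIV. \<bar>(v t - p) $ i\<bar>)" by (rule norm_le_l1_cart)
    also have "\<dots> = (\<Sum>i\<in>UNIV. d i (v t $ i))"
    proof (rule sum.cong)
      fix i show "\<bar>(v t - p) $ i\<bar> = d i (v t $ i)"
        using bounds[of i] by (auto simp: p_def d_def max_def min_def)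
    qed simp
    finally show ?thesis .
  qed
  have "((\<lambda>t. infdist (v t) (safe_set vlo vhi)) \<longlongrightarrow> 0) at_top"
    by (rule tendsto_sandwich[OF _ _ tendsto_const sumlim])
       (auto simp: upper infdist_nonneg)
  then show ?thesis by (simp add: v_def M_def)
qed

end
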